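(* Let $X$ be a compact metrizable space, let $F_1^\bullet,\dots,F_N^\bullet$ be open subsets of $X$, and let $F_i^\circ\subset F_i^\bullet$ be open subsets with $\overline{F_i^\circ}\subset F_i^\bullet$ and $X=\bigcup_{i=1}^NF_i^\circ$. Let $\mathcal{I}$ be the set of nonempty subsets of $\{1,\dots,N\}$, partially ordered by inclusion, and order its elements as $I_1,\dots,I_M$ so that $I_k\subseteq I_l$ implies $k\le l$. For each $i$ choose open sets $$F_i^\circ=:G_i^1\sqsubset F_i^1\sqsubset G_i^2\sqsubset F_i^2\sqsubset\cdots\sqsubset G_i^M\sqsubset F_i^M:=F_i^\bullet,$$ where $A\sqsubset B$ means $\overline{A}\subset B$. For $I_k\in\mathcal{I}$ define $$F_{I_k}^\square:=\Big(\bigcap_{i\in I_k}F_i^k\Big)\setminus\Big(\bigcup_{i\notin I_k}\overline{G_i^k}\Big).$$ Then for all $I,J\in\mathcal{I}$, $\overline{F_I^\square}\cap\overline{F_J^\square}\ne\emptyset$ implies $I\subseteq J$ or $J\subseteq I$.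
   Context: All closures are taken in $X$. *)

theory Defs
  imports "HOL-Analysis.Analysis"
begin

definition Fsquare ::
  "'a topology \<Rightarrow> nat \<Rightarrow> (nat \<Rightarrow> nat set) \<Rightarrow> (nat \<Rightarrow> nat \<Rightarrow> 'a set)
     \<Rightarrow> (nat \<Rightarrow> nat \<Rightarrow> 'a set) \<Rightarrow> nat \<Rightarrow> 'a set" where
  "Fsquare X N Ik F G k =
     (\<Inter>i\<in>Ik k. F i k) - (\<Union>i\<in>{1..N} - Ik k. X closure_of (G i k))"

end

theory Submission
  imports Defs
begin

theorem lemma11p5:
  fixes X :: "'a topology" and N M :: nat
    and Ik :: "nat \<Rightarrow> nat set"
    and F G :: "nat \<Rightarrow> nat \<Rightarrow> 'a set"
  assumes cpt: "compact_space X" and metr: "metrizable_space X"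
    and enum: "bij_betw Ik {1..M} {I. I \<subseteq> {1..N} \<and> I \<noteq> {}}"
    and enum_mono: "\<And>k l. k \<in> {1..M} \<Longrightarrow> l \<in> {1..M} \<Longrightarrow> Ik k \<subseteq> Ik l \<Longrightarrow> k \<le> l"
    and openF: "\<And>i k. i \<in> {1..N} \<Longrightarrow> k \<in> {1..M} \<Longrightarrow> openin X (F i k)"
    and openG: "\<And>i k. i \<in> {1..N} \<Longrightarrow> k \<in> {1..M} \<Longrightarrow> openin X (G i k)"
    and GF: "\<And>i k. i \<in> {1..N} \<Longrightarrow> k \<in> {1..M} \<Longrightarrow> X closure_of (G i k) \<subseteq> F i k"
    and FG: "\<And>i k. i \<in> {1..N} \<Longrightarrow> k \<in> {1..M} \<Longrightarrow> k < M \<Longrightarrow>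
               X closure_of (F i k) \<subseteq> G i (Suc k)"
    and circ_bullet: "\<And>i. i \<in> {1..N} \<Longrightarrow> X closure_of (G i 1) \<subseteq> F i M"
    and cover: "topspace X = (\<Union>i\<in>{1..N}. G i 1)"
  shows "\<forall>k\<in>{1..M}. \<forall>l\<in>{1..M}.
           X closure_of (Fsquare X N Ik F G k) \<inter> X closure_of (Fsquare X N Ik F G l) \<noteq> {}
           \<longrightarrow> Ik k \<subseteq> Ik l \<or> Ik l \<subseteq> Ik k"
proof -
  have chain0: "Suc k + d \<le> M \<longrightarrow> G i (Suc k) \<subseteq> G i (Suc k + d)"
    if i: "i \<in> {1..N}" and k: "k \<ge> 1" for i k d
  proof (induction d)
    case 0
    then show ?case by simp
  next
    case (Suc d)
    show ?case
    proof
      assume le: "Suc k + Suc d \<le> M"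
      define j where "j = Suc k + d"
      have jM1: "j \<in> {1..M}" using le unfolding j_def by simp
      have jM2: "j < M" using le unfolding j_def by simp
      have IH: "G i (Suc k) \<subseteq> G i j" using Suc le unfolding j_def by simp
      have "G i j \<subseteq> X closure_of G i j"
        by (rule closure_of_subset[OF openin_subset[OF openG[OF i jM1]]])
      also have "\<dots> \<subseteq> F i j" by (rule GF[OF i jM1])
      also have "\<dots> \<subseteq> X closure_of F i j"
        by (rule closure_of_subset[OF openin_subset[OF openF[OF i jM1]]])
      also have "\<dots> \<subseteq> G i (Suc j)" by (rule FG[OF i jM1 jM2])
      finally have "G i j \<subseteq> G i (Suc j)" .
      with IH have "G i (Suc k) \<subseteq> G i (Suc j)" by (rule subset_trans)
      then show "G i (Suc k) \<subseteq> G i (Suc k + Suc d)" unfolding j_def by simp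
    qed
  qed
  have chain: "G i (Suc k) \<subseteq> G i l"
    if i: "i \<in> {1..N}" and k: "k \<ge> 1" and kl: "k < l" and lM: "l \<le> M" for i k l
  proof -
    have e: "l = Suc k + (l - Suc k)" using kl by simp
    have "Suc k + (l - Suc k) \<le> M" using kl lM by simp
    then have "G i (Suc k) \<subseteq> G i (Suc k + (l - Suc k))" using chain0[OF i k] by blast
    then show ?thesis using e by metis
  qed
  have main: "Ik k \<subseteq> Ik l"
    if k: "k \<in> {1..M}" and l: "l \<in> {1..M}" and kl: "k < l"
      and ne: "X closure_of (Fsquare X N Ik F G k) \<inter> X closure_of (Fsquare X N Ik F G l) \<noteq> {}"
    for k l
  proof (rule ccontr)
    assume "\<not> Ik k \<subseteq> Ik l"
    then obtain i where ik: "i \<in> Ik k" and il: "i \<notin> Ik l" by blast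
    have "Ik k \<in> {I. I \<subseteq> {1..N} \<and> I \<noteq> {}}" using bij_betwE[OF enum] k by blast
    then have iN: "i \<in> {1..N}" using ik by blast
    obtain x where x1: "x \<in> X closure_of (Fsquare X N Ik F G k)"
      and x2: "x \<in> X closure_of (Fsquare X N Ik F G l)" using ne by blast
    have "Fsquare X N Ik F G k \<subseteq> F i k" using ik unfolding Fsquare_def by blast
    hence "X closure_of (Fsquare X N Ik F G k) \<subseteq> X closure_of F i k" by (rule closure_of_mono)
    also have "\<dots> \<subseteq> G i (Suc k)" using FG[OF iN k] kl l by simp
    also have "\<dots> \<subseteq> G i l" apply (rule chain[OF iN]) using k l kl by simp_all
    finally have xG: "x \<in> G i l" using x1 by blast
    have oG: "openin X (G i l)" using openG[OF iN l] .
    have "G i l \<inter> Fsquare X N Ik F G l = {}"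
    proof -
      have "G i l \<subseteq> X closure_of G i l"
        by (rule closure_of_subset[OF openin_subset[OF oG]])
      moreover have "X closure_of G i l \<inter> Fsquare X N Ik F G l = {}"
      proof -
        have "i \<in> {1..N} - Ik l" using iN il by blast
        hence "X closure_of G i l \<subseteq> (\<Union>j\<in>{1..N} - Ik l. X closure_of (G j l))" by blast
        thus ?thesis unfolding Fsquare_def by blast
      qed
      ultimately show ?thesis by blast
    qed
    hence "G i l \<inter> X closure_of (Fsquare X N Ik F G l) = {}"
      using openin_Int_closure_of_eq_empty[OF oG] by blast
    thus False using xG x2 by blast
  qed
  show ?thesis
  proof (intro ballI impI)
    fix k l assume k: "k \<in> {1..M}" and l: "l \<in> {1..M}"
      and ne: "X closure_of (Fsquare X N Ik F G k) \<inter> X closure_of (Fsquare X N Ik F G l) \<noteq> {}"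
    consider "k < l" | "k = l" | "l < k" by linarith
    then show "Ik k \<subseteq> Ik l \<or> Ik l \<subseteq> Ik k"
    proof cases
      case 1 then show ?thesis using main[OF k l _ ne] by blast
    next
      case 2 then show ?thesis by simp
    next
      case 3 then show ?thesis using main[OF l k] ne by blast
    qed
  qed
qed

end
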